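(* If $n\ge 0$ is an integer such that $B_{n+1}(t)-B_n(t)$ is a constant polynomial, then $n=2^{m}-2$ for some integer $m\ge 1$, and in that case $B_{n+1}(t)-B_n(t)=1$.
   Context: The Stern polynomials $B_n(t)\in\mathbb{Z}[t]$, $n\ge 0$, are defined by $B_0(t)=0$, $B_1(t)=1$, $B_{2n}(t)=tB_n(t)$ and $B_{2n+1}(t)=B_n(t)+B_{n+1}(t)$ for $n\ge 1$. *)

theory Defs
  imports "HOL-Computational_Algebra.Polynomial"
begin

function stern_poly :: "nat \<Rightarrow> int poly" where
  "stern_poly n =
     (if n = 0 then 0
      else if n = 1 then 1
      else if even n then [:0, 1:] * stern_poly (n div 2)
      else stern_poly (n div 2) + stern_poly (n div 2 + 1))"
  by auto
termination
  by (relation "measure id") (auto elim!: oddE)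

end

theory Submission
  imports Defs
begin

declare stern_poly.simps[simp del]

lemma sp_even: "n \<ge> 1 \<Longrightarrow> stern_poly (2*n) = [:0,1:] * stern_poly n"
  by (subst stern_poly.simps) auto

lemma sp_odd: "n \<ge> 1 \<Longrightarrow> stern_poly (2*n+1) = stern_poly n + stern_poly (n+1)"
  by (subst stern_poly.simps) auto

lemma sp1': "stern_poly (Suc 0) = 1" by (subst stern_poly.simps) auto

lemma sp_odd': "n \<ge> 1 \<Longrightarrow> stern_poly (Suc (2*n)) = stern_poly n + stern_poly (Suc n)"
  using sp_odd by simp

lemma sp0: "stern_poly 0 = 0" by (subst stern_poly.simps) auto
lemma sp1: "stern_poly 1 = 1" by (subst stern_poly.simps) auto

lemma nat_cases2:
  fixes n :: nat
  assumes "n = 0 \<Longrightarrow> P" "n = 1 \<Longrightarrow> P" "\<And>k. k \<ge> 1 \<Longrightarrow> n = 2*k \<Longrightarrow> P"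
    "\<And>k. k \<ge> 1 \<Longrightarrow> n = 2*k+1 \<Longrightarrow> P"
  shows P
proof (cases "even n")
  case True then obtain k where "n = 2*k" by blast
  then show ?thesis using assms by (cases "k = 0") auto
next
  case False then obtain k where "n = 2*k+1" using oddE by blast
  then show ?thesis using assms by (cases "k = 0") auto
qed

lemma sp_at2: "poly (stern_poly n) 2 = int n"
proof (induction n rule: less_induct)
  case (less n)
  show ?case
  proof (rule nat_cases2[of n])
    fix k assume "k \<ge> 1" "n = 2*k"
    then show ?thesis using less.IH[of k] by (simp add: sp_even)
  next
    fix k assume "k \<ge> 1" "n = 2*k+1"
    then show ?thesis using less.IH[of k] less.IH[of "k+1"] by (simp add: sp_odd sp_odd')
  qed (auto simp: sp0 sp1 sp1')
qed

lemma sp_at0: "poly (stern_poly n) 0 = (if odd n then 1 else 0)"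
proof (induction n rule: less_induct)
  case (less n)
  show ?case
  proof (rule nat_cases2[of n])
    fix k assume "k \<ge> 1" "n = 2*k"
    then show ?thesis by (simp add: sp_even)
  next
    fix k assume "k \<ge> 1" "n = 2*k+1"
    then show ?thesis using less.IH[of k] less.IH[of "k+1"] by (auto simp: sp_odd sp_odd')
  qed (auto simp: sp0 sp1 sp1')
qed

lemma sp_at1_pos: "n \<ge> 1 \<Longrightarrow> poly (stern_poly n) 1 \<ge> 1"
proof (induction n rule: less_induct)
  case (less n)
  show ?case
  proof (rule nat_cases2[of n])
    fix k assume "k \<ge> 1" "n = 2*k"
    then show ?thesis using less.IH[of k] by (simp add: sp_even)
  next
    fix k assume "k \<ge> 1" "n = 2*k+1"
    then show ?thesis using less.IH[of k] less.IH[of "k+1"] by (simp add: sp_odd sp_odd')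
  qed (use less in \<open>auto simp: sp0 sp1 sp1'\<close>)
qed

lemma sp_at1_one: "n \<ge> 1 \<Longrightarrow> poly (stern_poly n) 1 = 1 \<Longrightarrow> \<exists>j. n = 2^j"
proof (induction n rule: less_induct)
  case (less n)
  show ?case
  proof (rule nat_cases2[of n])
    fix k assume k: "k \<ge> 1" "n = 2*k"
    then have "\<exists>j. k = 2^j" using less by (simp add: sp_even)
    then obtain j where "k = 2^j" by blast
    then show ?thesis using k by (metis power_Suc)
  next
    fix k assume "k \<ge> 1" "n = 2*k+1"
    then show ?thesis using less sp_at1_pos[of k] sp_at1_pos[of "k+1"] by (simp add: sp_odd sp_odd')
  next
    assume "n = 1" then show ?thesis by (metis power_0)
  qed (use less in auto)
qed

theorem theorem5p2:
  fixes n :: nat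
  assumes "degree (stern_poly (n + 1) - stern_poly n) = 0"
  shows "(\<exists>m::nat. m \<ge> 1 \<and> n = 2 ^ m - 2) \<and> stern_poly (n + 1) - stern_poly n = 1"
proof -
  define D where "D = stern_poly (n + 1) - stern_poly n"
  have deg: "degree D = 0" using assms D_def by simp
  obtain c where c: "D = [:c:]" using deg degree0_coeffs by blast
  have pc: "\<And>x. poly D x = c" using c by simp
  have D2: "poly D 2 = 1" by (simp add: D_def sp_at2)
  have D0: "poly D 0 = (if odd n then -1 else 1)" by (simp add: D_def sp_at0)
  have ev: "even n" using D0 D2 pc[of 0] pc[of 2] by (auto split: if_splits)
  have D1: "D = 1"
    using c D2 by (simp add: one_pCons)
  obtain k where k: "n = 2*k" using ev by blast
  have "\<exists>m::nat. m \<ge> 1 \<and> n = 2 ^ m - 2"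
  proof (cases "k = 0")
    case True then show ?thesis using k by (intro exI[of _ 1]) auto
  next
    case False
    have "poly D 1 = 1" using D1 by simp
    hence "poly (stern_poly (k+1)) 1 = 1"
    proof -
      have "stern_poly (n+1) = stern_poly k + stern_poly (k+1)" using False k sp_odd[of k] by simp
      moreover have "stern_poly n = [:0,1:] * stern_poly k" using False k sp_even[of k] by simp
      moreover have "poly D 1 = 1" by fact
      ultimately show ?thesis by (simp add: D_def)
    qed
    then obtain j where j: "k + 1 = 2^j" using sp_at1_one[of "k+1"] by auto
    have "n = 2^(j+1) - 2" using j k by simp
    then show ?thesis by (intro exI[of _ "j+1"]) auto
  qed
  then show ?thesis using D1 D_def by simp
qed

end
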